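(* Let $(a,b,c)\in\mathbb{Z}^3$ be a primitive triple with $a^2+b^3=c^{10}$, and suppose that $f(x)=x^3+3bx-2a$ is irreducible over $\mathbb{Q}$. Then the splitting field of $f$ over $\mathbb{Q}$ is isomorphic to the splitting field of $x^3-6x-6$ over $\mathbb{Q}$; equivalently $\mathbb{Q}(E_{(a,b,c)}[2])\cong\mathbb{Q}(E_{(3,-2,1)}[2])$.
   Context: A triple $(a,b,c)$ is primitive if $\gcd(a,b,c)=1$. $E_{(a,b,c)}$ denotes the curve $Y^2=X^3+3bX-2a$, and $\mathbb{Q}(E[2])$ denotes the field generated by the coordinates of the $2$-torsion points, i.e. the splitting field of the cubic. *)

theory Defs
  imports "HOL-Computational_Algebra.Polynomial_Factorial" Complex_Main
begin

definition is_subfield_C :: "complex set \<Rightarrow> bool" where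
  "is_subfield_C K \<longleftrightarrow> 0 \<in> K \<and> 1 \<in> K \<and>
     (\<forall>x\<in>K. \<forall>y\<in>K. x + y \<in> K \<and> x * y \<in> K) \<and>
     (\<forall>x\<in>K. - x \<in> K) \<and> (\<forall>x\<in>K. x \<noteq> 0 \<longrightarrow> inverse x \<in> K)"

definition gen_subfield_C :: "complex set \<Rightarrow> complex set" where
  "gen_subfield_C S = \<Inter>{K. S \<subseteq> K \<and> is_subfield_C K}"

text \<open>Splitting field over Q of a rational polynomial, realised inside C:
  the field generated over Q by all complex roots of p.\<close>
definition splitting_field_C :: "rat poly \<Rightarrow> complex set" where
  "splitting_field_C p = gen_subfield_C {z. poly (map_poly of_rat p) z = 0}"

definition fields_isomorphic :: "complex set \<Rightarrow> complex set \<Rightarrow> bool" where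
  "fields_isomorphic K L \<longleftrightarrow> (\<exists>f. bij_betw f K L \<and>
     (\<forall>x\<in>K. \<forall>y\<in>K. f (x + y) = f x + f y \<and> f (x * y) = f x * f y))"

end

theory Submission
  imports Defs "HOL-Computational_Algebra.Nth_Powers"
begin

lemma gen_sub: "is_subfield_C (gen_subfield_C S)"
  unfolding gen_subfield_C_def is_subfield_C_def by blast

lemma gen_incl: "S \<subseteq> gen_subfield_C S"
  unfolding gen_subfield_C_def by auto

lemma gen_min: "is_subfield_C K \<Longrightarrow> S \<subseteq> K \<Longrightarrow> gen_subfield_C S \<subseteq> K"
  unfolding gen_subfield_C_def by auto

lemma sub_add: "is_subfield_C K \<Longrightarrow> x \<in> K \<Longrightarrow> y \<in> K \<Longrightarrow> x + y \<in> K"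
  and sub_mult: "is_subfield_C K \<Longrightarrow> x \<in> K \<Longrightarrow> y \<in> K \<Longrightarrow> x * y \<in> K"
  and sub_uminus: "is_subfield_C K \<Longrightarrow> x \<in> K \<Longrightarrow> - x \<in> K"
  and sub_0: "is_subfield_C K \<Longrightarrow> 0 \<in> K"
  and sub_1: "is_subfield_C K \<Longrightarrow> 1 \<in> K"
  unfolding is_subfield_C_def by auto

lemma sub_inverse: "is_subfield_C K \<Longrightarrow> x \<in> K \<Longrightarrow> inverse x \<in> K"
  unfolding is_subfield_C_def by (cases "x = 0") simp_all

lemma sub_diff: "is_subfield_C K \<Longrightarrow> x \<in> K \<Longrightarrow> y \<in> K \<Longrightarrow> x - y \<in> K"
  unfolding diff_conv_add_uminus by (intro sub_add sub_uminus)

lemma sub_divide: "is_subfield_C K \<Longrightarrow> x \<in> K \<Longrightarrow> y \<in> K \<Longrightarrow> x / y \<in> K"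
  unfolding divide_inverse by (intro sub_mult sub_inverse)

lemma sub_power: "is_subfield_C K \<Longrightarrow> x \<in> K \<Longrightarrow> x ^ n \<in> K"
  by (induction n) (simp_all add: sub_mult sub_1)

lemma sub_of_nat: "is_subfield_C K \<Longrightarrow> of_nat n \<in> K"
  by (induction n) (simp_all add: sub_add sub_1 sub_0)

lemma sub_of_int: assumes "is_subfield_C K" shows "of_int n \<in> K"
proof (cases "n \<ge> 0")
  case True
  then show ?thesis using sub_of_nat[OF assms, of "nat n"] by simp
next
  case False
  then show ?thesis using sub_uminus[OF assms sub_of_nat[OF assms, of "nat (-n)"]] by simp
qed

lemma gen_eq: "S \<subseteq> gen_subfield_C T \<Longrightarrow> T \<subseteq> gen_subfield_C S \<Longrightarrow> gen_subfield_C S = gen_subfield_C T"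
  by (simp add: gen_min gen_sub subset_antisym)

lemma cube_int:
  fixes x y z :: int
  assumes "coprime x y" "x * y = z ^ 3"
  shows "\<exists>s. x = s ^ 3"
proof (cases "x = 0 \<or> y = 0")
  case True
  then show ?thesis
  proof
    assume "x = 0" thus ?thesis by (intro exI[of _ 0]) simp
  next
    assume "y = 0"
    with assms(1) have "is_unit x" by simp
    hence "x = 1 \<or> x = -1" using zdvd1_eq by fastforce
    thus ?thesis
    proof
      assume "x = 1" thus ?thesis by (intro exI[of _ 1]) simp
    next
      assume "x = -1" thus ?thesis by (intro exI[of _ "-1"]) simp
    qed
  qed
next
  case False
  have "coprime (nat \<bar>x\<bar>) (nat \<bar>y\<bar>)" using assms(1)
    by (simp add: coprime_int_iff[symmetric] )
  moreover have "nat \<bar>x\<bar> * nat \<bar>y\<bar> = (nat \<bar>z\<bar>) ^ 3"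
    proof -
    have "\<bar>x\<bar> * \<bar>y\<bar> = \<bar>z\<bar> ^ 3" using assms(2) by (metis abs_mult power_abs)
    thus ?thesis by (metis nat_abs_mult_distrib nat_power_eq abs_ge_zero abs_mult)
  qed
  ultimately have "is_nth_power 3 (nat \<bar>x\<bar>)"
    using is_nth_power_mult_coprime_natD(1)[of "nat \<bar>x\<bar>" "nat \<bar>y\<bar>" 3] False by auto
  then obtain t where t: "nat \<bar>x\<bar> = t ^ 3" by (auto elim: is_nth_powerE)
  hence "\<bar>x\<bar> = int t ^ 3" by (metis abs_ge_zero int_nat_eq of_nat_power)
  thus ?thesis
    by (cases "x \<ge> 0") (auto intro: exI[of _ "int t"] exI[of _ "- int t"])
qed



lemma cubic_fact:
  fixes w u v A B z :: complex
  assumes w: "w^2 + w + 1 = 0" and uv: "u*v = -B" and s: "u^3 + v^3 = 2*A"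
  shows "z^3 + 3*B*z - 2*A = (z - (u+v)) * (z - (w*u + w^2*v)) * (z - (w^2*u + w*v))"
  using assms by algebra

lemma disc_fact:
  fixes w u v :: complex
  assumes w: "w^2 + w + 1 = 0"
  shows "((u+v) - (w*u + w^2*v)) * ((w*u + w^2*v) - (w^2*u + w*v)) * ((w^2*u + w*v) - (u+v))
     = -3*(2*w+1)*(u^3-v^3)"
  using assms by algebra

lemma u_fact:
  fixes w u v :: complex
  assumes w: "w^2 + w + 1 = 0"
  shows "(u+v) + w^2 * (w*u + w^2*v) + w * (w^2*u + w*v) = 3*u"
  using assms by algebra


lemma w_root: "(Complex (-1/2) (sqrt 3 / 2))^2 + Complex (-1/2) (sqrt 3 / 2) + 1 = 0"
  by (simp add: complex_eq_iff power2_eq_square)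

lemma theta3: "(complex_of_real (root 3 2))^3 = 2"
  by (simp flip: of_real_power)

lemma rootsF: "{z. poly (map_poly of_rat [:- 2 * of_int a, 3 * of_int b, 0, 1 :: rat:]) z = 0}
   = {z::complex. z^3 + 3 * of_int b * z - 2 * of_int a = 0}"
  by (simp add: map_poly_pCons of_rat_mult of_rat_minus algebra_simps power3_eq_cube)

lemma no_root:
  fixes p :: "rat poly"
  assumes "irreducible p" "degree p = 3" "poly p r = 0"
  shows False
proof -
  have "[:-r,1:] dvd p" using assms(3) by (simp add: poly_eq_0_iff_dvd)
  then obtain q where q: "p = [:-r,1:] * q" by auto
  from irreducibleD[OF assms(1) q] have "is_unit [:-r,1:] \<or> is_unit q" .
  moreover have "\<not> is_unit [:-r,1::rat:]" by (simp add: is_unit_iff_degree)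
  moreover have q0: "q \<noteq> 0" using q assms(2) by auto
  hence "degree p = degree [:-r,1::rat:] + degree q" unfolding q by (intro degree_mult_eq) auto
  hence "degree q = 2" using assms(2) by simp
  hence "\<not> is_unit q" using q0 by (simp add: is_unit_iff_degree)
  ultimately show False by blast
qed

lemma gen_roots:
  fixes w u :: complex and a b C :: int
  assumes w: "w^2 + w + 1 = 0" and u: "u \<noteq> 0" "u^3 = of_int a + of_int C"
    and C: "C^2 = a^2 + b^3" "C \<noteq> 0"
  shows "gen_subfield_C {z. z^3 + 3 * of_int b * z - 2 * of_int a = 0} = gen_subfield_C {w, u}"
proof -
  define v where "v = - of_int b / u"
  define r0 r1 r2 where "r0 = u + v" "r1 = w*u + w^2*v" "r2 = w^2*u + w*v"
  have uv: "u * v = - of_int b" using u by (simp add: v_def)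
  have Cc: "(of_int C :: complex)^2 = (of_int a)^2 + (of_int b)^3"
    using arg_cong[OF C(1), of "of_int :: int \<Rightarrow> complex"] by simp
  have "(u * v)^3 = - ((of_int b)^3)" using uv by simp
  hence "u^3 * v^3 = (of_int a + of_int C) * (of_int a - of_int C)"
    using Cc by (simp add: power_mult_distrib algebra_simps power2_eq_square)
  moreover have "(of_int a + of_int C :: complex) \<noteq> 0" using u by (metis power_not_zero)
  ultimately have v3: "v^3 = of_int a - of_int C" using u by simp
  have s: "u^3 + v^3 = 2 * of_int a" using u(2) v3 by simp
  have R: "{z. z^3 + 3 * of_int b * z - 2 * of_int a = 0} = {r0, r1, r2}"
    using cubic_fact[OF w uv s] unfolding r0_r1_r2_def by auto
  let ?K = "gen_subfield_C {w, u}"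
  have K: "is_subfield_C ?K" by (rule gen_sub)
  have wK: "w \<in> ?K" and uK: "u \<in> ?K" using gen_incl[of "{w,u}"] by auto
  have vK: "v \<in> ?K" unfolding v_def by (intro sub_divide sub_uminus sub_of_int K uK)
  have "{r0, r1, r2} \<subseteq> ?K" unfolding r0_r1_r2_def
    using K wK uK vK by (auto intro!: sub_add sub_mult sub_power)
  moreover
  let ?L = "gen_subfield_C {r0, r1, r2}"
  have L: "is_subfield_C ?L" by (rule gen_sub)
  have rL: "r0 \<in> ?L" "r1 \<in> ?L" "r2 \<in> ?L" using gen_incl[of "{r0,r1,r2}"] by auto
  have D: "(r0 - r1) * (r1 - r2) * (r2 - r0) = - 6 * of_int C * (2*w+1)"
    unfolding r0_r1_r2_def disc_fact[OF w] u(2) v3 by (simp add: algebra_simps)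
  have "w = ((r0 - r1) * (r1 - r2) * (r2 - r0) / (- 6 * of_int C) - 1) / 2"
    unfolding D using C(2) by (simp add: field_simps)
  hence wL: "w \<in> ?L" using L rL
    by (metis sub_divide sub_diff sub_mult sub_of_int sub_1 of_int_numeral of_int_minus of_int_mult)
  have "u = (r0 + w^2 * r1 + w * r2) / 3"
    using u_fact[OF w, of u v] unfolding r0_r1_r2_def by simp
  hence uL: "u \<in> ?L" using L rL wL
    by (metis sub_divide sub_add sub_mult sub_power sub_of_int of_int_numeral)
  have "{w, u} \<subseteq> ?L" using wL uL by auto
  ultimately show ?thesis unfolding R by (intro gen_eq) auto
qed


lemma coprime_ac:
  fixes a b c :: int
  assumes g: "gcd a (gcd b c) = 1" and e: "a ^ 2 + b ^ 3 = c ^ 10"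
  shows "coprime a c"
proof -
  define d where "d = gcd a c"
  have da: "d dvd a" and dc: "d dvd c" unfolding d_def by auto
  have b3: "b^3 = c^10 - a^2" using e by simp
  have "d dvd c^10" using dc by (rule dvd_trans) simp
  moreover have "d dvd a^2" using da by (rule dvd_trans) simp
  ultimately have db3: "d dvd b^3" unfolding b3 by (intro dvd_diff)
  have "gcd d b dvd gcd a (gcd b c)" using da dc
    by (meson dvd_trans gcd_dvd1 gcd_dvd2 gcd_greatest)
  hence "coprime d b" using g by (simp add: coprime_iff_gcd_eq_1 is_unit_gcd)
  hence "coprime d (b^3)" by simp
  hence "is_unit d" using coprime_common_divisor[of d "b^3" d] db3 by simp
  thus ?thesis unfolding d_def by (simp add: coprime_iff_gcd_eq_1 is_unit_gcd)
qed

lemma key_int: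
  fixes a b c :: int
  assumes g: "gcd a (gcd b c) = 1" and e: "a ^ 2 + b ^ 3 = c ^ 10"
  shows "(\<exists>C s. (C = c^5 \<or> C = - (c^5)) \<and> a + C = 2 * s^3 \<and> s \<noteq> 0) \<or>
         (\<exists>C s. (C = c^5 \<or> C = - (c^5)) \<and> a + C = s^3 \<and> s \<noteq> 0)"
proof -
  have cac: "coprime a (c^5)" using coprime_ac[OF g e] by simp
  define x where "x = a + c^5"
  define y where "y = a - c^5"
  have "x * y = a^2 - (c^5)^2" unfolding x_def y_def by (simp add: algebra_simps power2_eq_square)
  also have "(c^5)^2 = c^10" by (simp only: power_mult[symmetric]) simp
  also have "a^2 - c^10 = (- b)^3" using e by simp
  finally have xy: "x * y = (- b)^3" .
  define gg where "gg = gcd x y"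
  have "gg dvd x + y" "gg dvd x - y" unfolding gg_def by auto
  moreover have "x + y = 2 * a" "x - y = 2 * c^5" unfolding x_def y_def by simp_all
  ultimately have "gg dvd 2 * a" "gg dvd 2 * c^5" by simp_all
  hence "gg dvd gcd (2*a) (2*c^5)" by simp
  also have "gcd (2*a) (2*c^5) = 2" using cac by (simp only: gcd_mult_left coprime_iff_gcd_eq_1) simp
  finally have g2: "gg dvd 2" .
  have "gg \<ge> 0" unfolding gg_def by simp
  moreover have "gg \<le> 2" using g2 zdvd_imp_le by auto
  moreover have "gg \<noteq> 0" using g2 by auto
  ultimately have "gg = 1 \<or> gg = 2" by auto
  thus ?thesis
  proof
    assume "gg = 1"
    hence "coprime x y" unfolding gg_def by (simp add: coprime_iff_gcd_eq_1)
    from cube_int[OF this xy] obtain s where s: "x = s^3" by auto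
    have "s \<noteq> 0"
    proof
      assume "s = 0"
      hence "x = 0" using s by simp
      with \<open>coprime x y\<close> have "is_unit y" by simp
      moreover have "y = 2 * a" using \<open>x = 0\<close> unfolding x_def y_def by simp
      ultimately have "is_unit (2 * a)" by simp
      hence "is_unit (2::int)" by (simp only: is_unit_mult_iff)
      thus False by simp
    qed
    thus ?thesis using s unfolding x_def by (intro disjI2 exI[of _ "c^5"] exI[of _ s]) simp
  next
    assume "gg = 2"
    hence "2 dvd x" "2 dvd y" unfolding gg_def by (metis gcd_dvd1, metis gcd_dvd2)
    then obtain x' y' where x': "x = 2 * x'" and y': "y = 2 * y'" by (auto elim!: dvdE)
    have "gcd x y = 2 * gcd x' y'" unfolding x' y' by (simp only: gcd_mult_left) simp
    hence cxy: "coprime x' y'" using \<open>gg = 2\<close> unfolding gg_def by (simp add: coprime_iff_gcd_eq_1)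
    have "even ((-b)^3)" using xy x' by (metis dvd_mult2 dvd_triv_left)
    hence "even b" by simp
    then obtain b' where b': "b = 2 * b'" by (auto elim!: evenE)
    have xy': "x' * y' = - 2 * b'^3" using xy unfolding x' y' b' by (simp add: power_mult_distrib)
    show ?thesis
    proof (cases "even x'")
      case False
      have "coprime x' 2" using False by simp
      hence "coprime x' (2^2)" by (simp only: coprime_power_right_iff) simp
      hence "coprime x' 4" by simp
      hence "coprime x' (4 * y')" using cxy by simp
      moreover have "x' * (4 * y') = (- 2 * b')^3" using xy' by (simp add: power_mult_distrib algebra_simps)
      ultimately obtain s where s: "x' = s^3" using cube_int by blast
      have "s \<noteq> 0" using s False by auto
      thus ?thesis using s x' unfolding x_def by (intro disjI1 exI[of _ "c^5"] exI[of _ s]) simp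
    next
      case True
      have "odd y'"
      proof
        assume "even y'"
        hence "is_unit (2::int)" using coprime_common_divisor[OF cxy] True by blast
        thus False by simp
      qed
      have "coprime y' 2" using \<open>odd y'\<close> by simp
      hence "coprime y' (2^2)" by (simp only: coprime_power_right_iff) simp
      hence "coprime y' 4" by simp
      moreover have "coprime y' x'" using cxy by (simp add: coprime_commute)
      ultimately have "coprime y' (4 * x')" by simp
      moreover have "y' * (4 * x') = (- 2 * b')^3" using xy' by (simp add: power_mult_distrib algebra_simps)
      ultimately obtain s where s: "y' = s^3" using cube_int by blast
      have "s \<noteq> 0" using s \<open>odd y'\<close> by auto
      moreover have "a + (- (c^5)) = 2 * s^3" using s y' unfolding y_def by simp
      ultimately show ?thesis by (intro disjI1 exI[of _ "- (c^5)"] exI[of _ s]) simp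
    qed
  qed
qed

lemma rat_root_aux:
  fixes q A B C :: rat
  assumes "q \<noteq> 0" "q^3 = A + C" "C^2 = A^2 + B^3"
  shows "(q - B/q)^3 + 3*B*(q - B/q) - 2*A = 0"
proof -
  have "(q - B/q)^3 + 3*B*(q - B/q) - 2*A = (q^3*q^3 - B^3 - 2*A*q^3) / q^3"
    using assms(1) by (simp add: field_simps power3_eq_cube)
  also have "q^3*q^3 - B^3 - 2*A*q^3 = 0" unfolding assms(2)
    using assms(3) by (simp add: algebra_simps power2_eq_square power3_eq_cube)
  finally show ?thesis by simp
qed

lemma polyF_eval: "poly [:- 2 * of_int a, 3 * of_int b, 0, 1 :: rat:] r = r^3 + 3 * of_int b * r - 2 * of_int a"
  by (simp add: algebra_simps power3_eq_cube)

lemma gen_scale: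
  fixes w t :: complex and s :: int
  assumes "s \<noteq> 0"
  shows "gen_subfield_C {w, of_int s * t} = gen_subfield_C {w, t}"
proof (rule gen_eq)
  have K: "is_subfield_C (gen_subfield_C {w, t})" by (rule gen_sub)
  have "w \<in> gen_subfield_C {w, t}" "t \<in> gen_subfield_C {w, t}" using gen_incl[of "{w,t}"] by auto
  thus "{w, of_int s * t} \<subseteq> gen_subfield_C {w, t}" using K by (auto intro: sub_mult sub_of_int)
  have L: "is_subfield_C (gen_subfield_C {w, of_int s * t})" by (rule gen_sub)
  have "w \<in> gen_subfield_C {w, of_int s * t}" and st: "of_int s * t \<in> gen_subfield_C {w, of_int s * t}"
    using gen_incl[of "{w, of_int s * t}"] by auto
  moreover have "t = (of_int s * t) / of_int s" using assms by simp
  hence "t \<in> gen_subfield_C {w, of_int s * t}" using L st by (metis sub_divide sub_of_int)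
  ultimately show "{w, t} \<subseteq> gen_subfield_C {w, of_int s * t}" by auto
qed

theorem lemma3p4:
  fixes a b c :: int
  assumes "gcd a (gcd b c) = 1"
    and "a ^ 2 + b ^ 3 = c ^ 10"
    and "irreducible [:- 2 * of_int a, 3 * of_int b, 0, 1 :: rat:]"
  shows "fields_isomorphic (splitting_field_C [:- 2 * of_int a, 3 * of_int b, 0, 1 :: rat:])
                           (splitting_field_C [:- 6, - 6, 0, 1 :: rat:])"
proof -
  let ?F = "[:- 2 * of_int a, 3 * of_int b, 0, 1 :: rat:]"
  have degF: "degree ?F = 3" by simp
  define w where "w = Complex (-1/2) (sqrt 3 / 2)"
  have w: "w^2 + w + 1 = 0" using w_root unfolding w_def .
  define t where "t = complex_of_real (root 3 2)"
  have t3: "t^3 = 2" using theta3 unfolding t_def .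
  have t0: "t \<noteq> 0" using t3 by auto
  have c0: "c \<noteq> 0"
  proof
    assume "c = 0"
    hence e0: "a^2 = - (b^3)" using assms(2) by simp
    have "coprime a b" using assms(1) \<open>c = 0\<close> by (simp add: coprime_iff_gcd_eq_1)
    hence "coprime b (a^2)" by (simp add: coprime_commute)
    moreover have "b dvd a^2" unfolding e0 by (simp add: power3_eq_cube)
    ultimately have "is_unit b" using coprime_common_divisor[of b "a^2" b] by simp
    hence "\<bar>b\<bar> = 1" by (simp add: zdvd1_eq)
    moreover have "b \<noteq> 1"
    proof
      assume "b = 1" hence "a^2 = -1" using e0 by simp
      moreover have "a^2 \<ge> 0" by simp
      ultimately show False by simp
    qed
    ultimately have b1: "b = -1" by auto
    hence a2: "a^2 = 1" using e0 by simp
    have "poly ?F (- of_int a) = 0"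
    proof -
      have "(of_int a :: rat)^2 = 1" using a2 by (metis of_int_eq_1_iff of_int_power)
      thus ?thesis unfolding polyF_eval b1 by (simp add: algebra_simps power3_eq_cube power2_eq_square)
    qed
    thus False using no_root[OF assms(3) degF] by blast
  qed
  have CC: "\<And>C. C = c^5 \<or> C = - (c^5) \<Longrightarrow> C^2 = a^2 + b^3 \<and> C \<noteq> 0"
  proof -
    fix C assume "C = c^5 \<or> C = - (c^5)"
    hence "C^2 = c^10" "C \<noteq> 0" using c0 by (auto simp flip: power_mult)
    thus "C^2 = a^2 + b^3 \<and> C \<noteq> 0" using assms(2) by simp
  qed
  have not2: "\<not> (\<exists>C s. (C = c^5 \<or> C = - (c^5)) \<and> a + C = s^3 \<and> s \<noteq> 0)"
  proof
    assume "\<exists>C s. (C = c^5 \<or> C = - (c^5)) \<and> a + C = s^3 \<and> s \<noteq> 0"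
    then obtain C s where C: "C = c^5 \<or> C = - (c^5)" and s: "a + C = s^3" "s \<noteq> 0" by blast
    define q where "q = (of_int s :: rat)"
    have "q \<noteq> 0" using s unfolding q_def by simp
    moreover have "q^3 = of_int a + of_int C" unfolding q_def
      using arg_cong[OF s(1), of "of_int :: int \<Rightarrow> rat"] by simp
    moreover have "(of_int C :: rat)^2 = (of_int a)^2 + (of_int b)^3"
      using arg_cong[OF conjunct1[OF CC[OF C]], of "of_int :: int \<Rightarrow> rat"] by simp
    ultimately have "poly ?F (q - of_int b / q) = 0"
      unfolding polyF_eval by (rule rat_root_aux)
    thus False using no_root[OF assms(3) degF] by blast
  qed
  have "\<exists>C s. (C = c^5 \<or> C = - (c^5)) \<and> a + C = 2 * s^3 \<and> s \<noteq> 0"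
    using key_int[OF assms(1,2)]
  proof (rule disjE)
    assume "\<exists>C s. (C = c^5 \<or> C = - (c^5)) \<and> a + C = s^3 \<and> s \<noteq> 0"
    with not2 show ?thesis by contradiction
  qed
  then obtain C s where C: "C = c^5 \<or> C = - (c^5)"
    and s: "a + C = 2 * s^3" "s \<noteq> 0" by blast
  have Cprops: "C^2 = a^2 + b^3" "C \<noteq> 0" using CC[OF C] by auto
  define u where "u = of_int s * t"
  have u0: "u \<noteq> 0" using s(2) t0 unfolding u_def by simp
  have u3: "u^3 = of_int a + of_int C" unfolding u_def
    using arg_cong[OF s(1), of "of_int :: int \<Rightarrow> complex"] t3 by (simp add: power_mult_distrib)
  have "splitting_field_C ?F = gen_subfield_C {w, u}"
    unfolding splitting_field_C_def rootsF by (rule gen_roots[OF w u0 u3 Cprops])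
  also have "\<dots> = gen_subfield_C {w, t}" unfolding u_def by (rule gen_scale[OF s(2)])
  also have "\<dots> = splitting_field_C [:- 6, - 6, 0, 1 :: rat:]"
  proof -
    have G: "[:- 6, - 6, 0, 1 :: rat:] = [:- 2 * of_int 3, 3 * of_int (-2), 0, 1 :: rat:]" by simp
    have "t^3 = of_int 3 + of_int (-1)" using t3 by simp
    from gen_roots[OF w t0 this, of "-2"]
    show ?thesis unfolding splitting_field_C_def G rootsF by simp
  qed
  finally have "splitting_field_C ?F = splitting_field_C [:- 6, - 6, 0, 1 :: rat:]" .
  thus ?thesis unfolding fields_isomorphic_def by (intro exI[of _ id]) simp
qed

end
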